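(* Let $F$ be a proof-irrelevant family of setoids over a setoid $I$. Then the categories $\mathcal S(I,F)$ and $\mathcal C(I,F)$ are isomorphic. Specifically, the map $M:\mathcal C(I,F)\to\mathcal S(I,F)$, identity on objects and $M(i,j,f)=(i,j,\mathcal G_f)$ on arrows, is a well-defined functor, the map $N:\mathcal S(I,F)\to\mathcal C(I,F)$, identity on objects and $N(i,j,R)=(i,j,f)$ with $f:F(i)\to F(j)$ the unique extensional function such that $\mathcal G_f$ and $R$ have the same extension, is a well-defined functor, and $M\circ N$ and $N\circ M$ are the identity functors.
   Context: Setoids are types with equivalence relations; extensional functions respect them; $=_{\rm ext}$ is pointwise equality. A proof-irrelevant family $F$ over a setoid $I$: setoids $F(x)$ ($x\in I$) and extensional transports $F(p):F(x)\to F(y)$ for $p:x=_Iy$, with (F1) $F(\mathrm{refl}(x))=_{\rm ext}\mathrm{id}$, (F2) $F(p)=_{\rm ext}F(q)$ for all $p,q:x=_Iy$, (F3) $F(q)\circ F(p)=_{\rm ext}F(q\circ p)$. $S=\Sigma(I,F)$: pairs $(x,y)$, $y\in F(x)$, with $(x,y)\sim(x',y')$ iff $\exists p:x=_Ix'$, $F(p)(y)=_{F(x')}y'$; $\check F(i)=\{u\in S:(\exists x\in F(i))\,u=_S(i,x)\}$. Graph of extensional $f:F(i)\to F(j)$: $(u,v)\,\dot\in\,\mathcal G_f$ iff $(\exists x\in F(i))[u=_S(i,x)\wedge v=_S(j,f(x))]$. The category $\mathcal C(I,F)$: objects form the setoid $I$; arrows are triples $(i,j,f)$ with $i,j\in I$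 and $f:F(i)\to F(j)$ extensional, with $(i,j,f)\sim(i',j',f')$ iff there are $p:i=_Ii'$, $q:j=_Ij'$ with $F(q)\circ f=_{\rm ext}f'\circ F(p)$; domain $i$, codomain $j$; $(i,j,f)$ and $(j',k,g)$ are composable when there is $p:j=_Ij'$, with composite $(i,k,g\circ F(p)\circ f)$; identity on $i$ is $(i,i,\mathrm{id}_{F(i)})$. The category $\mathcal S(I,F)$: objects form the setoid $I$; arrows are triples $(i,j,R)$ with $R$ a functional binary relation on $S$ (extensional predicate on $S\times S$ with $(u,v),(u,v')\,\dot\in\,R\Rightarrow v=_Sv'$) whose domain equals $\check F(i)$ and whose range is included in $\check F(j)$; $(i,j,R)=(i',j',R')$ iff $i=_Ii'$, $j=_Ij'$ and $R,R'$ have the same extension; domain $i$, codomain $j$; composite of $(i,j,R)$ and $(j',k,Q)$ with $j=_Ij'$ is $(i,k,Q\circ R)$ (relational composition); identity on $i$ is $(i,i,I_{\check F(i)})$ where $I_{\check F(i)}$ is the identity relation on $\check F(i)$. *)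

theory Defs
  imports Main
begin

definition setoid_on :: "'a set \<Rightarrow> ('a \<Rightarrow> 'a \<Rightarrow> bool) \<Rightarrow> bool" where
  "setoid_on A eq \<longleftrightarrow>
     (\<forall>x\<in>A. eq x x) \<and>
     (\<forall>x\<in>A. \<forall>y\<in>A. eq x y \<longrightarrow> eq y x) \<and>
     (\<forall>x\<in>A. \<forall>y\<in>A. \<forall>z\<in>A. eq x y \<and> eq y z \<longrightarrow> eq x z)"

definition ext_fun ::
  "'a set \<Rightarrow> ('a \<Rightarrow> 'a \<Rightarrow> bool) \<Rightarrow> 'b set \<Rightarrow> ('b \<Rightarrow> 'b \<Rightarrow> bool) \<Rightarrow> ('a \<Rightarrow> 'b) \<Rightarrow> bool" where
  "ext_fun A eqA B eqB f \<longleftrightarrow>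
     (\<forall>x\<in>A. f x \<in> B) \<and> (\<forall>x\<in>A. \<forall>y\<in>A. eqA x y \<longrightarrow> eqB (f x) (f y))"

definition ext_eq :: "'a set \<Rightarrow> ('b \<Rightarrow> 'b \<Rightarrow> bool) \<Rightarrow> ('a \<Rightarrow> 'b) \<Rightarrow> ('a \<Rightarrow> 'b) \<Rightarrow> bool" where
  "ext_eq A eqB f g \<longleftrightarrow> (\<forall>x\<in>A. eqB (f x) (g x))"

text \<open>The index setoid I has carrier Ic; the proofs of x =_I y form the set Ip x y
(proof-relevant equality, as in the type-theoretic setting).  Irefl, Isym, Itrans are the
reflexivity, symmetry and transitivity proof terms; Itrans q p is q o p.
Fc x and Feq x give the setoid F(x); Ftr p is the transport F(p).\<close>

record ('i, 'p, 'a) family =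
  Ic :: "'i set"
  Ip :: "'i \<Rightarrow> 'i \<Rightarrow> 'p set"
  Irefl :: "'i \<Rightarrow> 'p"
  Isym :: "'p \<Rightarrow> 'p"
  Itrans :: "'p \<Rightarrow> 'p \<Rightarrow> 'p"
  Fc :: "'i \<Rightarrow> 'a set"
  Feq :: "'i \<Rightarrow> 'a \<Rightarrow> 'a \<Rightarrow> bool"
  Ftr :: "'p \<Rightarrow> 'a \<Rightarrow> 'a"

definition Ieq :: "('i, 'p, 'a) family \<Rightarrow> 'i \<Rightarrow> 'i \<Rightarrow> bool" where
  "Ieq \<Phi> x y \<longleftrightarrow> Ip \<Phi> x y \<noteq> {}"

definition pi_family :: "('i, 'p, 'a) family \<Rightarrow> bool" where
  "pi_family \<Phi> \<longleftrightarrow>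
     \<comment> \<open>I is a setoid (with proof terms)\<close>
     (\<forall>x\<in>Ic \<Phi>. Irefl \<Phi> x \<in> Ip \<Phi> x x) \<and>
     (\<forall>x\<in>Ic \<Phi>. \<forall>y\<in>Ic \<Phi>. \<forall>p\<in>Ip \<Phi> x y. Isym \<Phi> p \<in> Ip \<Phi> y x) \<and>
     (\<forall>x\<in>Ic \<Phi>. \<forall>y\<in>Ic \<Phi>. \<forall>z\<in>Ic \<Phi>. \<forall>p\<in>Ip \<Phi> x y. \<forall>q\<in>Ip \<Phi> y z.
        Itrans \<Phi> q p \<in> Ip \<Phi> x z) \<and>
     \<comment> \<open>each F(x) is a setoid\<close>
     (\<forall>x\<in>Ic \<Phi>. setoid_on (Fc \<Phi> x) (Feq \<Phi> x)) \<and>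
     \<comment> \<open>transports are extensional functions F(x) -> F(y)\<close>
     (\<forall>x\<in>Ic \<Phi>. \<forall>y\<in>Ic \<Phi>. \<forall>p\<in>Ip \<Phi> x y.
        ext_fun (Fc \<Phi> x) (Feq \<Phi> x) (Fc \<Phi> y) (Feq \<Phi> y) (Ftr \<Phi> p)) \<and>
     \<comment> \<open>(F1)\<close>
     (\<forall>x\<in>Ic \<Phi>. ext_eq (Fc \<Phi> x) (Feq \<Phi> x) (Ftr \<Phi> (Irefl \<Phi> x)) id) \<and>
     \<comment> \<open>(F2)\<close>
     (\<forall>x\<in>Ic \<Phi>. \<forall>y\<in>Ic \<Phi>. \<forall>p\<in>Ip \<Phi> x y. \<forall>q\<in>Ip \<Phi> x y.
        ext_eq (Fc \<Phi> x) (Feq \<Phi> y) (Ftr \<Phi> p) (Ftr \<Phi> q)) \<and>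
     \<comment> \<open>(F3)\<close>
     (\<forall>x\<in>Ic \<Phi>. \<forall>y\<in>Ic \<Phi>. \<forall>z\<in>Ic \<Phi>. \<forall>p\<in>Ip \<Phi> x y. \<forall>q\<in>Ip \<Phi> y z.
        ext_eq (Fc \<Phi> x) (Feq \<Phi> z) (Ftr \<Phi> q \<circ> Ftr \<Phi> p) (Ftr \<Phi> (Itrans \<Phi> q p)))"

definition Scar :: "('i, 'p, 'a) family \<Rightarrow> ('i \<times> 'a) set" where
  "Scar \<Phi> = {(x, y). x \<in> Ic \<Phi> \<and> y \<in> Fc \<Phi> x}"

definition Seq :: "('i, 'p, 'a) family \<Rightarrow> 'i \<times> 'a \<Rightarrow> 'i \<times> 'a \<Rightarrow> bool" where
  "Seq \<Phi> u u' \<longleftrightarrow>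
     (\<exists>p\<in>Ip \<Phi> (fst u) (fst u'). Feq \<Phi> (fst u') (Ftr \<Phi> p (snd u)) (snd u'))"

definition Fcheck :: "('i, 'p, 'a) family \<Rightarrow> 'i \<Rightarrow> ('i \<times> 'a) set" where
  "Fcheck \<Phi> i = {u \<in> Scar \<Phi>. \<exists>x\<in>Fc \<Phi> i. Seq \<Phi> u (i, x)}"

definition graph ::
  "('i, 'p, 'a) family \<Rightarrow> 'i \<Rightarrow> 'i \<Rightarrow> ('a \<Rightarrow> 'a) \<Rightarrow> 'i \<times> 'a \<Rightarrow> 'i \<times> 'a \<Rightarrow> bool" where
  "graph \<Phi> i j f u v \<longleftrightarrow> (\<exists>x\<in>Fc \<Phi> i. Seq \<Phi> u (i, x) \<and> Seq \<Phi> v (j, f x))"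

text \<open>Binary relations on S are predicates on S x S; only their values on S x S matter.\<close>

definition same_ext ::
  "('i, 'p, 'a) family \<Rightarrow> ('i \<times> 'a \<Rightarrow> 'i \<times> 'a \<Rightarrow> bool) \<Rightarrow> ('i \<times> 'a \<Rightarrow> 'i \<times> 'a \<Rightarrow> bool) \<Rightarrow> bool" where
  "same_ext \<Phi> R R' \<longleftrightarrow> (\<forall>u\<in>Scar \<Phi>. \<forall>v\<in>Scar \<Phi>. R u v \<longleftrightarrow> R' u v)"

definition rel_dom :: "('i, 'p, 'a) family \<Rightarrow> ('i \<times> 'a \<Rightarrow> 'i \<times> 'a \<Rightarrow> bool) \<Rightarrow> ('i \<times> 'a) set" where
  "rel_dom \<Phi> R = {u \<in> Scar \<Phi>. \<exists>v\<in>Scar \<Phi>. R u v}"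

definition rel_range :: "('i, 'p, 'a) family \<Rightarrow> ('i \<times> 'a \<Rightarrow> 'i \<times> 'a \<Rightarrow> bool) \<Rightarrow> ('i \<times> 'a) set" where
  "rel_range \<Phi> R = {v \<in> Scar \<Phi>. \<exists>u\<in>Scar \<Phi>. R u v}"

definition functional_rel :: "('i, 'p, 'a) family \<Rightarrow> ('i \<times> 'a \<Rightarrow> 'i \<times> 'a \<Rightarrow> bool) \<Rightarrow> bool" where
  "functional_rel \<Phi> R \<longleftrightarrow>
     (\<forall>u\<in>Scar \<Phi>. \<forall>u'\<in>Scar \<Phi>. \<forall>v\<in>Scar \<Phi>. \<forall>v'\<in>Scar \<Phi>.
        Seq \<Phi> u u' \<and> Seq \<Phi> v v' \<and> R u v \<longrightarrow> R u' v') \<and>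
     (\<forall>u\<in>Scar \<Phi>. \<forall>v\<in>Scar \<Phi>. \<forall>v'\<in>Scar \<Phi>. R u v \<and> R u v' \<longrightarrow> Seq \<Phi> v v')"

definition rel_comp ::
  "('i, 'p, 'a) family \<Rightarrow> ('i \<times> 'a \<Rightarrow> 'i \<times> 'a \<Rightarrow> bool) \<Rightarrow> ('i \<times> 'a \<Rightarrow> 'i \<times> 'a \<Rightarrow> bool)
     \<Rightarrow> 'i \<times> 'a \<Rightarrow> 'i \<times> 'a \<Rightarrow> bool" where
  "rel_comp \<Phi> Q R u w \<longleftrightarrow> (\<exists>v\<in>Scar \<Phi>. R u v \<and> Q v w)"

definition id_rel :: "('i, 'p, 'a) family \<Rightarrow> 'i \<Rightarrow> 'i \<times> 'a \<Rightarrow> 'i \<times> 'a \<Rightarrow> bool" where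
  "id_rel \<Phi> i u v \<longleftrightarrow> u \<in> Fcheck \<Phi> i \<and> v \<in> Fcheck \<Phi> i \<and> Seq \<Phi> u v"

text \<open>Comp g f is the composite "g after f"; it is only meaningful when
ObEq (Cod f) (Dom g).\<close>

record ('o, 'm) setoid_cat =
  Ob :: "'o set"
  ObEq :: "'o \<Rightarrow> 'o \<Rightarrow> bool"
  Ar :: "'m set"
  ArEq :: "'m \<Rightarrow> 'm \<Rightarrow> bool"
  Dom :: "'m \<Rightarrow> 'o"
  Cod :: "'m \<Rightarrow> 'o"
  Comp :: "'m \<Rightarrow> 'm \<Rightarrow> 'm"
  Idt :: "'o \<Rightarrow> 'm"

definition is_functor ::
  "('o, 'm) setoid_cat \<Rightarrow> ('o2, 'm2) setoid_cat \<Rightarrow> ('o \<Rightarrow> 'o2) \<Rightarrow> ('m \<Rightarrow> 'm2) \<Rightarrow> bool" where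
  "is_functor A B Fo Fa \<longleftrightarrow>
     (\<forall>x\<in>Ob A. Fo x \<in> Ob B) \<and>
     (\<forall>x\<in>Ob A. \<forall>y\<in>Ob A. ObEq A x y \<longrightarrow> ObEq B (Fo x) (Fo y)) \<and>
     (\<forall>f\<in>Ar A. Fa f \<in> Ar B) \<and>
     (\<forall>f\<in>Ar A. \<forall>g\<in>Ar A. ArEq A f g \<longrightarrow> ArEq B (Fa f) (Fa g)) \<and>
     (\<forall>f\<in>Ar A. ObEq B (Dom B (Fa f)) (Fo (Dom A f)) \<and> ObEq B (Cod B (Fa f)) (Fo (Cod A f))) \<and>
     (\<forall>x\<in>Ob A. ArEq B (Fa (Idt A x)) (Idt B (Fo x))) \<and>
     (\<forall>f\<in>Ar A. \<forall>g\<in>Ar A. ObEq A (Cod A f) (Dom A g) \<longrightarrow>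
        ArEq B (Fa (Comp A g f)) (Comp B (Fa g) (Fa f)))"

definition is_identity_functor :: "('o, 'm) setoid_cat \<Rightarrow> ('o \<Rightarrow> 'o) \<Rightarrow> ('m \<Rightarrow> 'm) \<Rightarrow> bool" where
  "is_identity_functor A Fo Fa \<longleftrightarrow>
     (\<forall>x\<in>Ob A. ObEq A (Fo x) x) \<and> (\<forall>f\<in>Ar A. ArEq A (Fa f) f)"

definition catC :: "('i, 'p, 'a) family \<Rightarrow> ('i, 'i \<times> 'i \<times> ('a \<Rightarrow> 'a)) setoid_cat" where
  "catC \<Phi> =
    \<lparr> Ob = Ic \<Phi>,
      ObEq = Ieq \<Phi>,
      Ar = {(i, j, f). i \<in> Ic \<Phi> \<and> j \<in> Ic \<Phi> \<and>
                        ext_fun (Fc \<Phi> i) (Feq \<Phi> i) (Fc \<Phi> j) (Feq \<Phi> j) f},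
      ArEq = (\<lambda>(i, j, f) (i', j', f').
                \<exists>p\<in>Ip \<Phi> i i'. \<exists>q\<in>Ip \<Phi> j j'.
                  ext_eq (Fc \<Phi> i) (Feq \<Phi> j') (Ftr \<Phi> q \<circ> f) (f' \<circ> Ftr \<Phi> p)),
      Dom = (\<lambda>(i, j, f). i),
      Cod = (\<lambda>(i, j, f). j),
      Comp = (\<lambda>(j', k, g) (i, j, f). (i, k, g \<circ> Ftr \<Phi> (SOME p. p \<in> Ip \<Phi> j j') \<circ> f)),
      Idt = (\<lambda>i. (i, i, id)) \<rparr>"

definition S_arrow :: "('i, 'p, 'a) family \<Rightarrow> 'i \<Rightarrow> 'i \<Rightarrow> ('i \<times> 'a \<Rightarrow> 'i \<times> 'a \<Rightarrow> bool) \<Rightarrow> bool" where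
  "S_arrow \<Phi> i j R \<longleftrightarrow>
     functional_rel \<Phi> R \<and> rel_dom \<Phi> R = Fcheck \<Phi> i \<and> rel_range \<Phi> R \<subseteq> Fcheck \<Phi> j"

definition catS ::
  "('i, 'p, 'a) family \<Rightarrow> ('i, 'i \<times> 'i \<times> ('i \<times> 'a \<Rightarrow> 'i \<times> 'a \<Rightarrow> bool)) setoid_cat" where
  "catS \<Phi> =
    \<lparr> Ob = Ic \<Phi>,
      ObEq = Ieq \<Phi>,
      Ar = {(i, j, R). i \<in> Ic \<Phi> \<and> j \<in> Ic \<Phi> \<and> S_arrow \<Phi> i j R},
      ArEq = (\<lambda>(i, j, R) (i', j', R'). Ieq \<Phi> i i' \<and> Ieq \<Phi> j j' \<and> same_ext \<Phi> R R'),
      Dom = (\<lambda>(i, j, R). i),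
      Cod = (\<lambda>(i, j, R). j),
      Comp = (\<lambda>(j', k, Q) (i, j, R). (i, k, rel_comp \<Phi> Q R)),
      Idt = (\<lambda>i. (i, i, id_rel \<Phi> i)) \<rparr>"

definition M_arr :: "('i, 'p, 'a) family \<Rightarrow> 'i \<times> 'i \<times> ('a \<Rightarrow> 'a)
                      \<Rightarrow> 'i \<times> 'i \<times> ('i \<times> 'a \<Rightarrow> 'i \<times> 'a \<Rightarrow> bool)" where
  "M_arr \<Phi> = (\<lambda>(i, j, f). (i, j, graph \<Phi> i j f))"

definition N_fun :: "('i, 'p, 'a) family \<Rightarrow> 'i \<Rightarrow> 'i \<Rightarrow> ('i \<times> 'a \<Rightarrow> 'i \<times> 'a \<Rightarrow> bool) \<Rightarrow> 'a \<Rightarrow> 'a" where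
  "N_fun \<Phi> i j R = (SOME f. ext_fun (Fc \<Phi> i) (Feq \<Phi> i) (Fc \<Phi> j) (Feq \<Phi> j) f \<and>
                             same_ext \<Phi> (graph \<Phi> i j f) R)"

definition N_arr :: "('i, 'p, 'a) family \<Rightarrow> 'i \<times> 'i \<times> ('i \<times> 'a \<Rightarrow> 'i \<times> 'a \<Rightarrow> bool)
                      \<Rightarrow> 'i \<times> 'i \<times> ('a \<Rightarrow> 'a)" where
  "N_arr \<Phi> = (\<lambda>(i, j, R). (i, j, N_fun \<Phi> i j R))"

end

theory Submission imports Defs begin

locale pf = fixes \<Phi> :: "('i,'p,'a) family" assumes pif: "pi_family \<Phi>"
begin

lemma Irefl: "x \<in> Ic \<Phi> \<Longrightarrow> Irefl \<Phi> x \<in> Ip \<Phi> x x"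
  using pif unfolding pi_family_def by auto
lemma Isym: "x \<in> Ic \<Phi> \<Longrightarrow> y \<in> Ic \<Phi> \<Longrightarrow> p \<in> Ip \<Phi> x y \<Longrightarrow> Isym \<Phi> p \<in> Ip \<Phi> y x"
  using pif unfolding pi_family_def by auto
lemma Itrans: "x \<in> Ic \<Phi> \<Longrightarrow> y \<in> Ic \<Phi> \<Longrightarrow> z \<in> Ic \<Phi> \<Longrightarrow> p \<in> Ip \<Phi> x y \<Longrightarrow> q \<in> Ip \<Phi> y z
   \<Longrightarrow> Itrans \<Phi> q p \<in> Ip \<Phi> x z"
  using pif unfolding pi_family_def by auto
lemma Frefl: "x \<in> Ic \<Phi> \<Longrightarrow> a \<in> Fc \<Phi> x \<Longrightarrow> Feq \<Phi> x a a"
  using pif unfolding pi_family_def setoid_on_def by meson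
lemma Fsym: "x \<in> Ic \<Phi> \<Longrightarrow> a \<in> Fc \<Phi> x \<Longrightarrow> b \<in> Fc \<Phi> x \<Longrightarrow> Feq \<Phi> x a b \<Longrightarrow> Feq \<Phi> x b a"
  using pif unfolding pi_family_def setoid_on_def by meson
lemma Ftrans: "x \<in> Ic \<Phi> \<Longrightarrow> a \<in> Fc \<Phi> x \<Longrightarrow> b \<in> Fc \<Phi> x \<Longrightarrow> c \<in> Fc \<Phi> x \<Longrightarrow>
   Feq \<Phi> x a b \<Longrightarrow> Feq \<Phi> x b c \<Longrightarrow> Feq \<Phi> x a c"
  using pif unfolding pi_family_def setoid_on_def by meson
lemma Ftr_in: "x \<in> Ic \<Phi> \<Longrightarrow> y \<in> Ic \<Phi> \<Longrightarrow> p \<in> Ip \<Phi> x y \<Longrightarrow> a \<in> Fc \<Phi> x \<Longrightarrow> Ftr \<Phi> p a \<in> Fc \<Phi> y"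
  using pif unfolding pi_family_def ext_fun_def by meson
lemma Ftr_cong: "x \<in> Ic \<Phi> \<Longrightarrow> y \<in> Ic \<Phi> \<Longrightarrow> p \<in> Ip \<Phi> x y \<Longrightarrow> a \<in> Fc \<Phi> x \<Longrightarrow> b \<in> Fc \<Phi> x
   \<Longrightarrow> Feq \<Phi> x a b \<Longrightarrow> Feq \<Phi> y (Ftr \<Phi> p a) (Ftr \<Phi> p b)"
  using pif unfolding pi_family_def ext_fun_def by meson
lemma F1: "x \<in> Ic \<Phi> \<Longrightarrow> a \<in> Fc \<Phi> x \<Longrightarrow> Feq \<Phi> x (Ftr \<Phi> (Irefl \<Phi> x) a) a"
  using pif unfolding pi_family_def ext_eq_def by auto
lemma F2: "x \<in> Ic \<Phi> \<Longrightarrow> y \<in> Ic \<Phi> \<Longrightarrow> p \<in> Ip \<Phi> x y \<Longrightarrow> q \<in> Ip \<Phi> x y \<Longrightarrow> a \<in> Fc \<Phi> x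
   \<Longrightarrow> Feq \<Phi> y (Ftr \<Phi> p a) (Ftr \<Phi> q a)"
  using pif unfolding pi_family_def ext_eq_def by meson
lemma F3: "x \<in> Ic \<Phi> \<Longrightarrow> y \<in> Ic \<Phi> \<Longrightarrow> z \<in> Ic \<Phi> \<Longrightarrow> p \<in> Ip \<Phi> x y \<Longrightarrow> q \<in> Ip \<Phi> y z
   \<Longrightarrow> a \<in> Fc \<Phi> x \<Longrightarrow> Feq \<Phi> z (Ftr \<Phi> q (Ftr \<Phi> p a)) (Ftr \<Phi> (Itrans \<Phi> q p) a)"
proof -
  assume h: "x \<in> Ic \<Phi>" "y \<in> Ic \<Phi>" "z \<in> Ic \<Phi>" "p \<in> Ip \<Phi> x y" "q \<in> Ip \<Phi> y z" "a \<in> Fc \<Phi> x"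
  have "ext_eq (Fc \<Phi> x) (Feq \<Phi> z) (Ftr \<Phi> q \<circ> Ftr \<Phi> p) (Ftr \<Phi> (Itrans \<Phi> q p))"
    using pif h unfolding pi_family_def by blast
  then show ?thesis using h unfolding ext_eq_def by auto
qed

lemma Scar_pair[simp]: "(x,a) \<in> Scar \<Phi> \<longleftrightarrow> x \<in> Ic \<Phi> \<and> a \<in> Fc \<Phi> x"
  by (simp add: Scar_def)
lemma Seq_pair: "Seq \<Phi> (x,a) (y,b) \<longleftrightarrow> (\<exists>p\<in>Ip \<Phi> x y. Feq \<Phi> y (Ftr \<Phi> p a) b)"
  by (simp add: Seq_def)

lemma Seq_all: "x \<in> Ic \<Phi> \<Longrightarrow> y \<in> Ic \<Phi> \<Longrightarrow> a \<in> Fc \<Phi> x \<Longrightarrow> b \<in> Fc \<Phi> y \<Longrightarrow>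
  Seq \<Phi> (x,a) (y,b) \<Longrightarrow> p \<in> Ip \<Phi> x y \<Longrightarrow> Feq \<Phi> y (Ftr \<Phi> p a) b"
  unfolding Seq_pair using F2 Ftrans Ftr_in by metis

lemma Seq_tr: "x \<in> Ic \<Phi> \<Longrightarrow> y \<in> Ic \<Phi> \<Longrightarrow> p \<in> Ip \<Phi> x y \<Longrightarrow> a \<in> Fc \<Phi> x \<Longrightarrow>
  Seq \<Phi> (x,a) (y, Ftr \<Phi> p a)"
  unfolding Seq_pair using Frefl Ftr_in by blast

lemma Seq_fib: "x \<in> Ic \<Phi> \<Longrightarrow> a \<in> Fc \<Phi> x \<Longrightarrow> b \<in> Fc \<Phi> x \<Longrightarrow>
  Seq \<Phi> (x,a) (x,b) \<longleftrightarrow> Feq \<Phi> x a b"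
proof
  assume h: "x \<in> Ic \<Phi>" "a \<in> Fc \<Phi> x" "b \<in> Fc \<Phi> x" "Seq \<Phi> (x,a) (x,b)"
  then have "Feq \<Phi> x (Ftr \<Phi> (Irefl \<Phi> x) a) b" using Seq_all Irefl by blast
  then show "Feq \<Phi> x a b" using h F1 Fsym Ftrans Ftr_in Irefl by metis
next
  assume h: "x \<in> Ic \<Phi>" "a \<in> Fc \<Phi> x" "b \<in> Fc \<Phi> x" "Feq \<Phi> x a b"
  then have "Feq \<Phi> x (Ftr \<Phi> (Irefl \<Phi> x) a) b" using F1 Ftrans Ftr_in Irefl by metis
  then show "Seq \<Phi> (x,a) (x,b)" unfolding Seq_pair using Irefl h by blast
qed

lemma Seq_refl: "u \<in> Scar \<Phi> \<Longrightarrow> Seq \<Phi> u u"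
  by (cases u) (auto simp: Seq_fib Frefl)

lemma Seq_sym: "u \<in> Scar \<Phi> \<Longrightarrow> v \<in> Scar \<Phi> \<Longrightarrow> Seq \<Phi> u v \<Longrightarrow> Seq \<Phi> v u"
proof -
  assume hu: "u \<in> Scar \<Phi>" and hv: "v \<in> Scar \<Phi>" and s: "Seq \<Phi> u v"
  obtain x a where u: "u = (x,a)" by (cases u)
  obtain y b where v: "v = (y,b)" by (cases v)
  have x: "x \<in> Ic \<Phi>" "a \<in> Fc \<Phi> x" using hu u by auto
  have y: "y \<in> Ic \<Phi>" "b \<in> Fc \<Phi> y" using hv v by auto
  obtain p where p: "p \<in> Ip \<Phi> x y" "Feq \<Phi> y (Ftr \<Phi> p a) b" using s u v Seq_pair by blast
  define q where "q = Isym \<Phi> p"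
  have q: "q \<in> Ip \<Phi> y x" using Isym p x y q_def by blast
  have pa: "Ftr \<Phi> p a \<in> Fc \<Phi> y" using Ftr_in p x y by blast
  have e1: "Feq \<Phi> x (Ftr \<Phi> q b) (Ftr \<Phi> q (Ftr \<Phi> p a))"
    using Ftr_cong[OF y(1) x(1) q y(2) pa] Fsym[OF y(1) pa y(2) p(2)] by blast
  have tqp: "Itrans \<Phi> q p \<in> Ip \<Phi> x x" using Itrans x y p q by blast
  have e2: "Feq \<Phi> x (Ftr \<Phi> q (Ftr \<Phi> p a)) (Ftr \<Phi> (Itrans \<Phi> q p) a)"
    using F3 x y p q by blast
  have e3: "Feq \<Phi> x (Ftr \<Phi> (Itrans \<Phi> q p) a) (Ftr \<Phi> (Irefl \<Phi> x) a)"
    using F2 x tqp Irefl by blast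
  have e4: "Feq \<Phi> x (Ftr \<Phi> (Irefl \<Phi> x) a) a" using F1 x by blast
  have m1: "Ftr \<Phi> q b \<in> Fc \<Phi> x" using Ftr_in q x y by blast
  have m2: "Ftr \<Phi> q (Ftr \<Phi> p a) \<in> Fc \<Phi> x" using Ftr_in q x y pa by blast
  have m3: "Ftr \<Phi> (Itrans \<Phi> q p) a \<in> Fc \<Phi> x" using Ftr_in tqp x by blast
  have m4: "Ftr \<Phi> (Irefl \<Phi> x) a \<in> Fc \<Phi> x" using Ftr_in Irefl x by blast
  have "Feq \<Phi> x (Ftr \<Phi> q b) a"
    using Ftrans[OF x(1) m1 m2 x(2) e1 Ftrans[OF x(1) m2 m3 x(2) e2 Ftrans[OF x(1) m3 m4 x(2) e3 e4]]] .
  then show ?thesis using u v q Seq_pair by blast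
qed

lemma Seq_trans: "u \<in> Scar \<Phi> \<Longrightarrow> v \<in> Scar \<Phi> \<Longrightarrow> w \<in> Scar \<Phi> \<Longrightarrow> Seq \<Phi> u v \<Longrightarrow> Seq \<Phi> v w \<Longrightarrow> Seq \<Phi> u w"
proof -
  assume hu: "u \<in> Scar \<Phi>" and hv: "v \<in> Scar \<Phi>" and hw: "w \<in> Scar \<Phi>" and s: "Seq \<Phi> u v" and t: "Seq \<Phi> v w"
  obtain x a where u: "u = (x,a)" by (cases u)
  obtain y b where v: "v = (y,b)" by (cases v)
  obtain z c where w: "w = (z,c)" by (cases w)
  have x: "x \<in> Ic \<Phi>" "a \<in> Fc \<Phi> x" using hu u by auto
  have y: "y \<in> Ic \<Phi>" "b \<in> Fc \<Phi> y" using hv v by auto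
  have z: "z \<in> Ic \<Phi>" "c \<in> Fc \<Phi> z" using hw w by auto
  obtain p where p: "p \<in> Ip \<Phi> x y" "Feq \<Phi> y (Ftr \<Phi> p a) b" using s u v Seq_pair by blast
  obtain q where q: "q \<in> Ip \<Phi> y z" "Feq \<Phi> z (Ftr \<Phi> q b) c" using t v w Seq_pair by blast
  have pa: "Ftr \<Phi> p a \<in> Fc \<Phi> y" using Ftr_in p x y by blast
  have tqp: "Itrans \<Phi> q p \<in> Ip \<Phi> x z" using Itrans x y z p q by blast
  have e1: "Feq \<Phi> z (Ftr \<Phi> (Itrans \<Phi> q p) a) (Ftr \<Phi> q (Ftr \<Phi> p a))"
    using F3[OF x(1) y(1) z(1) p(1) q(1) x(2)] Fsym Ftr_in x y z p q tqp pa by metis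
  have e2: "Feq \<Phi> z (Ftr \<Phi> q (Ftr \<Phi> p a)) (Ftr \<Phi> q b)"
    using Ftr_cong[OF y(1) z(1) q(1) pa y(2) p(2)] .
  have m1: "Ftr \<Phi> (Itrans \<Phi> q p) a \<in> Fc \<Phi> z" using Ftr_in tqp x z by blast
  have m2: "Ftr \<Phi> q (Ftr \<Phi> p a) \<in> Fc \<Phi> z" using Ftr_in q y z pa by blast
  have m3: "Ftr \<Phi> q b \<in> Fc \<Phi> z" using Ftr_in q y z by blast
  have "Feq \<Phi> z (Ftr \<Phi> (Itrans \<Phi> q p) a) c"
    using Ftrans[OF z(1) m1 m2 z(2) e1 Ftrans[OF z(1) m2 m3 z(2) e2 q(2)]] .
  then show ?thesis using u w tqp Seq_pair by blast
qed


abbreviation EF where "EF i j f \<equiv> ext_fun (Fc \<Phi> i) (Feq \<Phi> i) (Fc \<Phi> j) (Feq \<Phi> j) f"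

lemma ext_in: "EF i j f \<Longrightarrow> a \<in> Fc \<Phi> i \<Longrightarrow> f a \<in> Fc \<Phi> j"
  unfolding ext_fun_def by blast
lemma ext_cong: "EF i j f \<Longrightarrow> a \<in> Fc \<Phi> i \<Longrightarrow> b \<in> Fc \<Phi> i \<Longrightarrow> Feq \<Phi> i a b \<Longrightarrow> Feq \<Phi> j (f a) (f b)"
  unfolding ext_fun_def by blast

lemma graph_alt:
  assumes i: "i \<in> Ic \<Phi>" and j: "j \<in> Ic \<Phi>" and f: "EF i j f"
    and u: "u \<in> Scar \<Phi>" and v: "v \<in> Scar \<Phi>" and x: "x \<in> Fc \<Phi> i" and ux: "Seq \<Phi> u (i,x)"
  shows "graph \<Phi> i j f u v \<longleftrightarrow> Seq \<Phi> v (j, f x)"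
proof
  assume "Seq \<Phi> v (j, f x)" then show "graph \<Phi> i j f u v" using x ux unfolding graph_def by blast
next
  assume "graph \<Phi> i j f u v"
  then obtain x' where x': "x' \<in> Fc \<Phi> i" "Seq \<Phi> u (i,x')" "Seq \<Phi> v (j, f x')"
    unfolding graph_def by blast
  have ix: "(i,x) \<in> Scar \<Phi>" "(i,x') \<in> Scar \<Phi>" using i x x' by auto
  have "Seq \<Phi> (i,x') (i,x)" using Seq_trans[OF ix(2) u ix(1) Seq_sym[OF u ix(2) x'(2)] ux] .
  then have "Feq \<Phi> i x' x" using Seq_fib i x x' by blast
  then have "Feq \<Phi> j (f x') (f x)" using ext_cong f x x' by blast
  then have s: "Seq \<Phi> (j, f x') (j, f x)" using Seq_fib j ext_in f x x' by blast
  have jx: "(j, f x) \<in> Scar \<Phi>" "(j, f x') \<in> Scar \<Phi>" using j ext_in f x x' by auto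
  show "Seq \<Phi> v (j, f x)" using Seq_trans[OF v jx(2) jx(1) x'(3) s] .
qed

lemma graph_S_arrow:
  assumes i: "i \<in> Ic \<Phi>" and j: "j \<in> Ic \<Phi>" and f: "EF i j f"
  shows "S_arrow \<Phi> i j (graph \<Phi> i j f)"
proof -
  have A: "graph \<Phi> i j f u' v'" if h: "u \<in> Scar \<Phi>" "u' \<in> Scar \<Phi>" "v \<in> Scar \<Phi>" "v' \<in> Scar \<Phi>"
    "Seq \<Phi> u u'" "Seq \<Phi> v v'" "graph \<Phi> i j f u v" for u u' v v'
  proof -
    obtain x where x: "x \<in> Fc \<Phi> i" "Seq \<Phi> u (i,x)" "Seq \<Phi> v (j, f x)" using h(7) unfolding graph_def by blast
    have ix: "(i,x) \<in> Scar \<Phi>" "(j,f x) \<in> Scar \<Phi>" using i j x ext_in f by auto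
    have "Seq \<Phi> u' (i,x)" using Seq_trans[OF h(2) h(1) ix(1) Seq_sym[OF h(1) h(2) h(5)] x(2)] .
    moreover have "Seq \<Phi> v' (j,f x)" using Seq_trans[OF h(4) h(3) ix(2) Seq_sym[OF h(3) h(4) h(6)] x(3)] .
    ultimately show ?thesis using x(1) unfolding graph_def by blast
  qed
  have B: "Seq \<Phi> v v'" if h: "u \<in> Scar \<Phi>" "v \<in> Scar \<Phi>" "v' \<in> Scar \<Phi>"
    "graph \<Phi> i j f u v" "graph \<Phi> i j f u v'" for u v v'
  proof -
    obtain x where x: "x \<in> Fc \<Phi> i" "Seq \<Phi> u (i,x)" "Seq \<Phi> v (j, f x)" using h(4) unfolding graph_def by blast
    have "Seq \<Phi> v' (j, f x)" using graph_alt[OF i j f h(1) h(3) x(1) x(2)] h(5) by blast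
    moreover have jfx: "(j,f x) \<in> Scar \<Phi>" using j x ext_in f by auto
    ultimately show ?thesis using Seq_trans[OF h(2) jfx h(3) x(3) Seq_sym[OF h(3) jfx]] by blast
  qed
  have C: "rel_dom \<Phi> (graph \<Phi> i j f) = Fcheck \<Phi> i"
  proof (rule set_eqI)
    fix u show "u \<in> rel_dom \<Phi> (graph \<Phi> i j f) \<longleftrightarrow> u \<in> Fcheck \<Phi> i"
    proof
      assume "u \<in> rel_dom \<Phi> (graph \<Phi> i j f)" then show "u \<in> Fcheck \<Phi> i"
        unfolding rel_dom_def Fcheck_def graph_def by blast
    next
      assume "u \<in> Fcheck \<Phi> i"
      then obtain x where x: "u \<in> Scar \<Phi>" "x \<in> Fc \<Phi> i" "Seq \<Phi> u (i,x)" unfolding Fcheck_def by blast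
      have ix: "(j,f x) \<in> Scar \<Phi>" using j x ext_in f by auto
      have "graph \<Phi> i j f u (j, f x)" using x Seq_refl[OF ix] unfolding graph_def by blast
      then show "u \<in> rel_dom \<Phi> (graph \<Phi> i j f)" using ix x unfolding rel_dom_def by blast
    qed
  qed
  have D: "rel_range \<Phi> (graph \<Phi> i j f) \<subseteq> Fcheck \<Phi> j"
    unfolding rel_range_def Fcheck_def graph_def using ext_in f by blast
  show ?thesis unfolding S_arrow_def functional_rel_def using A B C D by blast
qed

lemma graph_resp1:
  assumes i: "i \<in> Ic \<Phi>" and j: "j \<in> Ic \<Phi>" and f: "EF i j f"
    and i': "i' \<in> Ic \<Phi>" and j': "j' \<in> Ic \<Phi>" and f': "EF i' j' f'"
    and p: "p \<in> Ip \<Phi> i i'" and q: "q \<in> Ip \<Phi> j j'"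
    and e: "\<forall>x\<in>Fc \<Phi> i. Feq \<Phi> j' (Ftr \<Phi> q (f x)) (f' (Ftr \<Phi> p x))"
    and u: "u \<in> Scar \<Phi>" and v: "v \<in> Scar \<Phi>" and g: "graph \<Phi> i j f u v"
  shows "graph \<Phi> i' j' f' u v"
proof -
  obtain x where x: "x \<in> Fc \<Phi> i" "Seq \<Phi> u (i,x)" "Seq \<Phi> v (j, f x)" using g unfolding graph_def by blast
  define x' where "x' = Ftr \<Phi> p x"
  have x'c: "x' \<in> Fc \<Phi> i'" using Ftr_in i i' p x x'_def by blast
  have fx: "f x \<in> Fc \<Phi> j" using ext_in f x by blast
  have qfx: "Ftr \<Phi> q (f x) \<in> Fc \<Phi> j'" using Ftr_in j j' q fx by blast
  have f'x: "f' x' \<in> Fc \<Phi> j'" using ext_in f' x'c by blast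
  have s1: "Seq \<Phi> (i,x) (i',x')" using Seq_tr i i' p x x'_def by blast
  have ux': "Seq \<Phi> u (i',x')" using Seq_trans[OF u _ _ x(2) s1] i i' x x'c by auto
  have s2: "Seq \<Phi> (j, f x) (j', Ftr \<Phi> q (f x))" using Seq_tr j j' q fx by blast
  have s3: "Seq \<Phi> (j', Ftr \<Phi> q (f x)) (j', f' x')" using Seq_fib j' qfx f'x e x x'_def by blast
  have "Seq \<Phi> v (j', f' x')"
    using Seq_trans[OF v _ _ x(3) Seq_trans[OF _ _ _ s2 s3]] j j' fx qfx f'x by auto
  then show ?thesis using graph_alt[OF i' j' f' u v x'c ux'] by blast
qed

lemma graph_resp:
  assumes i: "i \<in> Ic \<Phi>" and j: "j \<in> Ic \<Phi>" and f: "EF i j f"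
    and i': "i' \<in> Ic \<Phi>" and j': "j' \<in> Ic \<Phi>" and f': "EF i' j' f'"
    and p: "p \<in> Ip \<Phi> i i'" and q: "q \<in> Ip \<Phi> j j'"
    and e: "\<forall>x\<in>Fc \<Phi> i. Feq \<Phi> j' (Ftr \<Phi> q (f x)) (f' (Ftr \<Phi> p x))"
  shows "same_ext \<Phi> (graph \<Phi> i j f) (graph \<Phi> i' j' f')"
  unfolding same_ext_def
proof (intro ballI iffI)
  fix u v assume u: "u \<in> Scar \<Phi>" and v: "v \<in> Scar \<Phi>"
  { assume "graph \<Phi> i j f u v" then show "graph \<Phi> i' j' f' u v" using graph_resp1[OF assms u v] by blast }
  assume g: "graph \<Phi> i' j' f' u v"
  obtain x' where x': "x' \<in> Fc \<Phi> i'" "Seq \<Phi> u (i',x')" "Seq \<Phi> v (j', f' x')" using g unfolding graph_def by blast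
  define x where "x = Ftr \<Phi> (Isym \<Phi> p) x'"
  have sp: "Isym \<Phi> p \<in> Ip \<Phi> i' i" using Isym i i' p by blast
  have xc: "x \<in> Fc \<Phi> i" using Ftr_in i i' sp x' x_def by blast
  have fx: "f x \<in> Fc \<Phi> j" using ext_in f xc by blast
  have f'x: "f' x' \<in> Fc \<Phi> j'" using ext_in f' x' by blast
  have s1: "Seq \<Phi> (i',x') (i,x)" using Seq_tr i i' sp x' x_def by blast
  have ux: "Seq \<Phi> u (i,x)" using Seq_trans[OF u _ _ x'(2) s1] i i' xc x' by auto
  have jfx: "(j, f x) \<in> Scar \<Phi>" using j fx by auto
  have "graph \<Phi> i j f u (j, f x)" using xc ux Seq_refl[OF jfx] unfolding graph_def by blast
  then have "graph \<Phi> i' j' f' u (j, f x)" using graph_resp1[OF assms u jfx] by blast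
  then have "Seq \<Phi> (j, f x) (j', f' x')" using graph_alt[OF i' j' f' u jfx x'(1) x'(2)] by blast
  moreover have jf': "(j', f' x') \<in> Scar \<Phi>" using j' f'x by simp
  ultimately have "Seq \<Phi> v (j, f x)" using Seq_trans[OF v jf' jfx x'(3) Seq_sym[OF jfx jf']] by blast
  then show "graph \<Phi> i j f u v" using xc ux unfolding graph_def by blast
qed


lemma ext_comp: "EF i j f \<Longrightarrow> EF j k g \<Longrightarrow> EF i k (g \<circ> f)"
  unfolding ext_fun_def by auto

lemma ext_tr: "x \<in> Ic \<Phi> \<Longrightarrow> y \<in> Ic \<Phi> \<Longrightarrow> p \<in> Ip \<Phi> x y \<Longrightarrow> EF x y (Ftr \<Phi> p)"
  unfolding ext_fun_def using Ftr_in Ftr_cong by blast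

lemma ext_id: "x \<in> Ic \<Phi> \<Longrightarrow> EF x x id"
  unfolding ext_fun_def by auto

lemma graph_comp:
  assumes i: "i \<in> Ic \<Phi>" and j: "j \<in> Ic \<Phi>" and j': "j' \<in> Ic \<Phi>" and k: "k \<in> Ic \<Phi>"
    and f: "EF i j f" and g: "EF j' k g" and p: "p \<in> Ip \<Phi> j j'"
  shows "same_ext \<Phi> (graph \<Phi> i k (g \<circ> Ftr \<Phi> p \<circ> f)) (rel_comp \<Phi> (graph \<Phi> j' k g) (graph \<Phi> i j f))"
  unfolding same_ext_def
proof (intro ballI iffI)
  fix u w assume u: "u \<in> Scar \<Phi>" and w: "w \<in> Scar \<Phi>"
  {
    assume "graph \<Phi> i k (g \<circ> Ftr \<Phi> p \<circ> f) u w"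
    then obtain x where x: "x \<in> Fc \<Phi> i" "Seq \<Phi> u (i,x)" "Seq \<Phi> w (k, g (Ftr \<Phi> p (f x)))"
      unfolding graph_def by auto
    have fx: "f x \<in> Fc \<Phi> j" using ext_in f x by blast
    have jfx: "(j, f x) \<in> Scar \<Phi>" using j fx by simp
    have pfx: "Ftr \<Phi> p (f x) \<in> Fc \<Phi> j'" using Ftr_in j j' p fx by blast
    have g1: "graph \<Phi> i j f u (j, f x)" using x Seq_refl[OF jfx] unfolding graph_def by blast
    have s: "Seq \<Phi> (j, f x) (j', Ftr \<Phi> p (f x))" using Seq_tr j j' p fx by blast
    have g2: "graph \<Phi> j' k g (j, f x) w" using graph_alt[OF j' k g jfx w pfx s] x(3) by blast
    show "rel_comp \<Phi> (graph \<Phi> j' k g) (graph \<Phi> i j f) u w"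
      unfolding rel_comp_def using jfx g1 g2 by blast
  }
  assume "rel_comp \<Phi> (graph \<Phi> j' k g) (graph \<Phi> i j f) u w"
  then obtain v where v: "v \<in> Scar \<Phi>" "graph \<Phi> i j f u v" "graph \<Phi> j' k g v w"
    unfolding rel_comp_def by blast
  obtain x where x: "x \<in> Fc \<Phi> i" "Seq \<Phi> u (i,x)" "Seq \<Phi> v (j, f x)" using v(2) unfolding graph_def by blast
  have fx: "f x \<in> Fc \<Phi> j" using ext_in f x by blast
  have jfx: "(j, f x) \<in> Scar \<Phi>" using j fx by simp
  have pfx: "Ftr \<Phi> p (f x) \<in> Fc \<Phi> j'" using Ftr_in j j' p fx by blast
  have jpfx: "(j', Ftr \<Phi> p (f x)) \<in> Scar \<Phi>" using j' pfx by simp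
  have s: "Seq \<Phi> (j, f x) (j', Ftr \<Phi> p (f x))" using Seq_tr j j' p fx by blast
  have vs: "Seq \<Phi> v (j', Ftr \<Phi> p (f x))" using Seq_trans[OF v(1) jfx jpfx x(3) s] .
  have "Seq \<Phi> w (k, g (Ftr \<Phi> p (f x)))" using graph_alt[OF j' k g v(1) w pfx vs] v(3) by blast
  then show "graph \<Phi> i k (g \<circ> Ftr \<Phi> p \<circ> f) u w" using x unfolding graph_def by auto
qed

lemma graph_id:
  assumes i: "i \<in> Ic \<Phi>"
  shows "same_ext \<Phi> (graph \<Phi> i i id) (id_rel \<Phi> i)"
  unfolding same_ext_def
proof (intro ballI iffI)
  fix u v assume u: "u \<in> Scar \<Phi>" and v: "v \<in> Scar \<Phi>"
  {
    assume "graph \<Phi> i i id u v"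
    then obtain x where x: "x \<in> Fc \<Phi> i" "Seq \<Phi> u (i,x)" "Seq \<Phi> v (i, x)"
      unfolding graph_def by auto
    have ix: "(i,x) \<in> Scar \<Phi>" using i x by simp
    have "Seq \<Phi> u v" using Seq_trans[OF u ix v x(2) Seq_sym[OF v ix x(3)]] .
    then show "id_rel \<Phi> i u v" unfolding id_rel_def Fcheck_def using u v x by blast
  }
  assume "id_rel \<Phi> i u v"
  then obtain x where x: "x \<in> Fc \<Phi> i" "Seq \<Phi> u (i,x)" "Seq \<Phi> u v" unfolding id_rel_def Fcheck_def by blast
  have ix: "(i,x) \<in> Scar \<Phi>" using i x by simp
  have "Seq \<Phi> v (i,x)" using Seq_trans[OF v u ix Seq_sym[OF u v x(3)] x(2)] .
  then show "graph \<Phi> i i id u v" using x unfolding graph_def by auto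
qed

lemma exist_fun:
  assumes i: "i \<in> Ic \<Phi>" and j: "j \<in> Ic \<Phi>" and R: "S_arrow \<Phi> i j R"
  shows "\<exists>f. EF i j f \<and> same_ext \<Phi> (graph \<Phi> i j f) R"
proof -
  have fr: "functional_rel \<Phi> R" and dom: "rel_dom \<Phi> R = Fcheck \<Phi> i" and rng: "rel_range \<Phi> R \<subseteq> Fcheck \<Phi> j"
    using R unfolding S_arrow_def by auto
  have Rext: "R u' v'" if "u \<in> Scar \<Phi>" "u' \<in> Scar \<Phi>" "v \<in> Scar \<Phi>" "v' \<in> Scar \<Phi>"
    "Seq \<Phi> u u'" "Seq \<Phi> v v'" "R u v" for u u' v v'
    using fr that unfolding functional_rel_def by blast
  have Rfun: "Seq \<Phi> v v'" if "u \<in> Scar \<Phi>" "v \<in> Scar \<Phi>" "v' \<in> Scar \<Phi>" "R u v" "R u v'" for u v v'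
    using fr that unfolding functional_rel_def by blast
  define f where "f = (\<lambda>x. SOME y. y \<in> Fc \<Phi> j \<and> R (i,x) (j,y))"
  have fx: "f x \<in> Fc \<Phi> j \<and> R (i,x) (j, f x)" if x: "x \<in> Fc \<Phi> i" for x
  proof -
    have ix: "(i,x) \<in> Scar \<Phi>" using i x by simp
    have "(i,x) \<in> Fcheck \<Phi> i" unfolding Fcheck_def using ix x Seq_refl[OF ix] by blast
    then obtain v where v: "v \<in> Scar \<Phi>" "R (i,x) v" using dom unfolding rel_dom_def by blast
    then have "v \<in> Fcheck \<Phi> j" using rng unfolding rel_range_def using ix by blast
    then obtain y where y: "y \<in> Fc \<Phi> j" "Seq \<Phi> v (j,y)" unfolding Fcheck_def by blast
    have jy: "(j,y) \<in> Scar \<Phi>" using j y by simp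
    have "R (i,x) (j,y)" using Rext[OF ix ix v(1) jy Seq_refl[OF ix] y(2) v(2)] .
    then have "\<exists>y. y \<in> Fc \<Phi> j \<and> R (i,x) (j,y)" using y by blast
    then show ?thesis unfolding f_def by (rule someI_ex)
  qed
  have ef: "EF i j f" unfolding ext_fun_def
  proof (intro conjI ballI impI)
    fix x assume "x \<in> Fc \<Phi> i" then show "f x \<in> Fc \<Phi> j" using fx by blast
  next
    fix x x' assume x: "x \<in> Fc \<Phi> i" and x': "x' \<in> Fc \<Phi> i" and e: "Feq \<Phi> i x x'"
    have ix: "(i,x) \<in> Scar \<Phi>" "(i,x') \<in> Scar \<Phi>" using i x x' by auto
    have jx: "(j,f x) \<in> Scar \<Phi>" "(j,f x') \<in> Scar \<Phi>" using j fx x x' by auto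
    have s: "Seq \<Phi> (i,x) (i,x')" using Seq_fib i x x' e by blast
    have "R (i,x') (j, f x)" using Rext[OF ix(1) ix(2) jx(1) jx(1) s Seq_refl[OF jx(1)]] fx x by blast
    then have "Seq \<Phi> (j, f x) (j, f x')" using Rfun[OF ix(2) jx(1) jx(2)] fx x' by blast
    then show "Feq \<Phi> j (f x) (f x')" using Seq_fib j fx x x' by blast
  qed
  have se: "same_ext \<Phi> (graph \<Phi> i j f) R" unfolding same_ext_def
  proof (intro ballI iffI)
    fix u v assume u: "u \<in> Scar \<Phi>" and v: "v \<in> Scar \<Phi>"
    {
      assume "graph \<Phi> i j f u v"
      then obtain x where x: "x \<in> Fc \<Phi> i" "Seq \<Phi> u (i,x)" "Seq \<Phi> v (j, f x)" unfolding graph_def by blast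
      have ix: "(i,x) \<in> Scar \<Phi>" "(j,f x) \<in> Scar \<Phi>" using i j x fx by auto
      show "R u v" using Rext[OF ix(1) u ix(2) v Seq_sym[OF u ix(1) x(2)] Seq_sym[OF v ix(2) x(3)]] fx x by blast
    }
    assume r: "R u v"
    then have "u \<in> Fcheck \<Phi> i" using dom u v unfolding rel_dom_def by blast
    then obtain x where x: "x \<in> Fc \<Phi> i" "Seq \<Phi> u (i,x)" unfolding Fcheck_def by blast
    have ix: "(i,x) \<in> Scar \<Phi>" "(j,f x) \<in> Scar \<Phi>" using i j x fx by auto
    have "R (i,x) v" using Rext[OF u ix(1) v v x(2) Seq_refl[OF v] r] .
    then have "Seq \<Phi> v (j, f x)" using Rfun[OF ix(1) v ix(2)] fx x by blast
    then show "graph \<Phi> i j f u v" using x unfolding graph_def by blast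
  qed
  show ?thesis using ef se by blast
qed

lemma same_ext_sym: "same_ext \<Phi> R R' \<Longrightarrow> same_ext \<Phi> R' R"
  unfolding same_ext_def by blast
lemma same_ext_trans: "same_ext \<Phi> R R' \<Longrightarrow> same_ext \<Phi> R' R'' \<Longrightarrow> same_ext \<Phi> R R''"
  unfolding same_ext_def by blast
lemma same_ext_refl: "same_ext \<Phi> R R"
  unfolding same_ext_def by blast
lemma rel_comp_resp: "same_ext \<Phi> Q Q' \<Longrightarrow> same_ext \<Phi> R R' \<Longrightarrow> same_ext \<Phi> (rel_comp \<Phi> Q R) (rel_comp \<Phi> Q' R')"
  unfolding same_ext_def rel_comp_def by blast

lemma unique_fun:
  assumes i: "i \<in> Ic \<Phi>" and j: "j \<in> Ic \<Phi>" and f: "EF i j f" and g: "EF i j g"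
    and s: "same_ext \<Phi> (graph \<Phi> i j f) (graph \<Phi> i j g)"
  shows "ext_eq (Fc \<Phi> i) (Feq \<Phi> j) f g"
  unfolding ext_eq_def
proof
  fix x assume x: "x \<in> Fc \<Phi> i"
  have ix: "(i,x) \<in> Scar \<Phi>" "(j,g x) \<in> Scar \<Phi>" using i j x ext_in g by auto
  have "graph \<Phi> i j g (i,x) (j, g x)" using x Seq_refl ix unfolding graph_def by blast
  then have "graph \<Phi> i j f (i,x) (j, g x)" using s ix unfolding same_ext_def by blast
  then have "Seq \<Phi> (j, g x) (j, f x)" using graph_alt[OF i j f ix(1) ix(2) x Seq_refl[OF ix(1)]] by blast
  then have "Feq \<Phi> j (g x) (f x)" using Seq_fib j ext_in f g x by blast
  then show "Feq \<Phi> j (f x) (g x)" using Fsym j ext_in f g x by blast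
qed

lemma N_fun_spec:
  assumes i: "i \<in> Ic \<Phi>" and j: "j \<in> Ic \<Phi>" and R: "S_arrow \<Phi> i j R"
  shows "EF i j (N_fun \<Phi> i j R) \<and> same_ext \<Phi> (graph \<Phi> i j (N_fun \<Phi> i j R)) R"
  unfolding N_fun_def using someI_ex[OF exist_fun[OF assms]] .

lemma C_eq_of_ext_eq:
  assumes i: "i \<in> Ic \<Phi>" and j: "j \<in> Ic \<Phi>" and f: "EF i j f" and g: "EF i j g"
    and e: "ext_eq (Fc \<Phi> i) (Feq \<Phi> j) f g"
  shows "ArEq (catC \<Phi>) (i,j,f) (i,j,g)"
proof -
  have "Feq \<Phi> j (Ftr \<Phi> (Irefl \<Phi> j) (f x)) (g (Ftr \<Phi> (Irefl \<Phi> i) x))" if x: "x \<in> Fc \<Phi> i" for x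
  proof -
    have m: "f x \<in> Fc \<Phi> j" "g x \<in> Fc \<Phi> j" "Ftr \<Phi> (Irefl \<Phi> j) (f x) \<in> Fc \<Phi> j"
      "Ftr \<Phi> (Irefl \<Phi> i) x \<in> Fc \<Phi> i" "g (Ftr \<Phi> (Irefl \<Phi> i) x) \<in> Fc \<Phi> j"
      using ext_in f g x Ftr_in Irefl i j by blast+
    have e1: "Feq \<Phi> j (Ftr \<Phi> (Irefl \<Phi> j) (f x)) (f x)" using F1 j m by blast
    have e2: "Feq \<Phi> j (f x) (g x)" using e x unfolding ext_eq_def by blast
    have e3: "Feq \<Phi> j (g x) (g (Ftr \<Phi> (Irefl \<Phi> i) x))"
      using ext_cong[OF g x m(4) Fsym[OF i m(4) x F1[OF i x]]] .
    show ?thesis using Ftrans[OF j m(3) m(1) m(5) e1 Ftrans[OF j m(1) m(2) m(5) e2 e3]] .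
  qed
  then show ?thesis unfolding catC_def ext_eq_def using Irefl i j by auto
qed


lemma C_eq_from_graph:
  assumes i: "i \<in> Ic \<Phi>" and j: "j \<in> Ic \<Phi>" and f: "EF i j f"
    and i': "i' \<in> Ic \<Phi>" and j': "j' \<in> Ic \<Phi>" and f': "EF i' j' f'"
    and ii: "Ieq \<Phi> i i'" and jj: "Ieq \<Phi> j j'"
    and s: "same_ext \<Phi> (graph \<Phi> i j f) (graph \<Phi> i' j' f')"
  shows "ArEq (catC \<Phi>) (i,j,f) (i',j',f')"
proof -
  obtain p where p: "p \<in> Ip \<Phi> i i'" using ii unfolding Ieq_def by blast
  obtain q where q: "q \<in> Ip \<Phi> j j'" using jj unfolding Ieq_def by blast
  have "Feq \<Phi> j' (Ftr \<Phi> q (f x)) (f' (Ftr \<Phi> p x))" if x: "x \<in> Fc \<Phi> i" for x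
  proof -
    have fx: "f x \<in> Fc \<Phi> j" using ext_in f x by blast
    have px: "Ftr \<Phi> p x \<in> Fc \<Phi> i'" using Ftr_in i i' p x by blast
    have f'px: "f' (Ftr \<Phi> p x) \<in> Fc \<Phi> j'" using ext_in f' px by blast
    have qfx: "Ftr \<Phi> q (f x) \<in> Fc \<Phi> j'" using Ftr_in j j' q fx by blast
    have sc: "(i,x) \<in> Scar \<Phi>" "(j, f x) \<in> Scar \<Phi>" "(j', Ftr \<Phi> q (f x)) \<in> Scar \<Phi>"
      "(j', f' (Ftr \<Phi> p x)) \<in> Scar \<Phi>" using i j j' x fx qfx f'px by auto
    have "graph \<Phi> i j f (i,x) (j, f x)" using x Seq_refl sc unfolding graph_def by blast
    then have g: "graph \<Phi> i' j' f' (i,x) (j, f x)" using s sc unfolding same_ext_def by blast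
    have "Seq \<Phi> (i,x) (i', Ftr \<Phi> p x)" using Seq_tr i i' p x by blast
    then have s1: "Seq \<Phi> (j, f x) (j', f' (Ftr \<Phi> p x))" using graph_alt[OF i' j' f' sc(1) sc(2) px] g by blast
    have s2: "Seq \<Phi> (j, f x) (j', Ftr \<Phi> q (f x))" using Seq_tr j j' q fx by blast
    have "Seq \<Phi> (j', Ftr \<Phi> q (f x)) (j', f' (Ftr \<Phi> p x))"
      using Seq_trans[OF sc(3) sc(2) sc(4) Seq_sym[OF sc(2) sc(3) s2] s1] .
    then show ?thesis using Seq_fib j' qfx f'px by blast
  qed
  then show ?thesis unfolding catC_def ext_eq_def using p q by auto
qed

lemma ball3: "(\<forall>F\<in>A. P F) \<longleftrightarrow> (\<forall>i j f. (i,j,f) \<in> A \<longrightarrow> P (i,j,f))" by auto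

lemma catC_simps:
  "Ob (catC \<Phi>) = Ic \<Phi>" "ObEq (catC \<Phi>) = Ieq \<Phi>"
  "(i,j,f) \<in> Ar (catC \<Phi>) \<longleftrightarrow> i \<in> Ic \<Phi> \<and> j \<in> Ic \<Phi> \<and> EF i j f"
  "Dom (catC \<Phi>) (i,j,f) = i" "Cod (catC \<Phi>) (i,j,f) = j"
  "Comp (catC \<Phi>) (j',k,g) (i,j,f) = (i, k, g \<circ> Ftr \<Phi> (SOME p. p \<in> Ip \<Phi> j j') \<circ> f)"
  "Idt (catC \<Phi>) i = (i,i,id)"
  by (simp_all add: catC_def)

lemma catS_simps:
  "Ob (catS \<Phi>) = Ic \<Phi>" "ObEq (catS \<Phi>) = Ieq \<Phi>"
  "(i,j,R) \<in> Ar (catS \<Phi>) \<longleftrightarrow> i \<in> Ic \<Phi> \<and> j \<in> Ic \<Phi> \<and> S_arrow \<Phi> i j R"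
  "ArEq (catS \<Phi>) (i,j,R) (i',j',R') \<longleftrightarrow> Ieq \<Phi> i i' \<and> Ieq \<Phi> j j' \<and> same_ext \<Phi> R R'"
  "Dom (catS \<Phi>) (i,j,R) = i" "Cod (catS \<Phi>) (i,j,R) = j"
  "Comp (catS \<Phi>) (j',k,Q) (i,j,R) = (i, k, rel_comp \<Phi> Q R)"
  "Idt (catS \<Phi>) i = (i,i,id_rel \<Phi> i)"
  by (simp_all add: catS_def)

lemma Ieq_refl: "x \<in> Ic \<Phi> \<Longrightarrow> Ieq \<Phi> x x"
  unfolding Ieq_def using Irefl by blast

lemma M_functor: "is_functor (catC \<Phi>) (catS \<Phi>) id (M_arr \<Phi>)"
  unfolding is_functor_def ball3
proof (intro conjI allI impI ballI)
  fix i j f i' j' f'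
  assume a: "(i,j,f) \<in> Ar (catC \<Phi>)" and b: "(i',j',f') \<in> Ar (catC \<Phi>)"
  {
    assume e: "ArEq (catC \<Phi>) (i,j,f) (i',j',f')"
    then obtain p q where p: "p \<in> Ip \<Phi> i i'" and q: "q \<in> Ip \<Phi> j j'"
      and e': "\<forall>x\<in>Fc \<Phi> i. Feq \<Phi> j' (Ftr \<Phi> q (f x)) (f' (Ftr \<Phi> p x))"
      unfolding catC_def ext_eq_def by auto
    have "same_ext \<Phi> (graph \<Phi> i j f) (graph \<Phi> i' j' f')"
      using graph_resp[OF _ _ _ _ _ _ p q e'] a b by (simp add: catC_simps)
    moreover have "Ieq \<Phi> i i'" "Ieq \<Phi> j j'" using p q unfolding Ieq_def by auto
    ultimately show "ArEq (catS \<Phi>) (M_arr \<Phi> (i,j,f)) (M_arr \<Phi> (i',j',f'))"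
      by (simp add: M_arr_def catS_simps)
  }
  {
    assume e: "ObEq (catC \<Phi>) (Cod (catC \<Phi>) (i,j,f)) (Dom (catC \<Phi>) (i',j',f'))"
    then have jj: "Ieq \<Phi> j i'" by (simp add: catC_simps)
    define p where "p = (SOME p. p \<in> Ip \<Phi> j i')"
    have p: "p \<in> Ip \<Phi> j i'" using jj unfolding Ieq_def p_def by (simp add: some_in_eq)
    have "same_ext \<Phi> (graph \<Phi> i j' (f' \<circ> Ftr \<Phi> p \<circ> f)) (rel_comp \<Phi> (graph \<Phi> i' j' f') (graph \<Phi> i j f))"
      using graph_comp[OF _ _ _ _ _ _ p] a b by (simp add: catC_simps)
    moreover have "Ieq \<Phi> i i" "Ieq \<Phi> j' j'" using a b Ieq_refl by (auto simp: catC_simps)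
    ultimately show "ArEq (catS \<Phi>) (M_arr \<Phi> (Comp (catC \<Phi>) (i',j',f') (i,j,f)))
        (Comp (catS \<Phi>) (M_arr \<Phi> (i',j',f')) (M_arr \<Phi> (i,j,f)))"
      by (simp add: M_arr_def catS_simps catC_simps p_def)
  }
next
  fix i j f assume a: "(i,j,f) \<in> Ar (catC \<Phi>)"
  then show "M_arr \<Phi> (i,j,f) \<in> Ar (catS \<Phi>)"
    using graph_S_arrow by (simp add: M_arr_def catS_simps catC_simps)
  show "ObEq (catS \<Phi>) (Dom (catS \<Phi>) (M_arr \<Phi> (i, j, f))) (id (Dom (catC \<Phi>) (i, j, f)))"
    using a Ieq_refl by (simp add: M_arr_def catS_simps catC_simps)
  show "ObEq (catS \<Phi>) (Cod (catS \<Phi>) (M_arr \<Phi> (i, j, f))) (id (Cod (catC \<Phi>) (i, j, f)))"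
    using a Ieq_refl by (simp add: M_arr_def catS_simps catC_simps)
next
  fix x assume "x \<in> Ob (catC \<Phi>)" then show "id x \<in> Ob (catS \<Phi>)" by (simp add: catC_simps catS_simps)
next
  fix x y assume "ObEq (catC \<Phi>) x y" then show "ObEq (catS \<Phi>) (id x) (id y)" by (simp add: catC_simps catS_simps)
next
  fix x assume "x \<in> Ob (catC \<Phi>)"
  then show "ArEq (catS \<Phi>) (M_arr \<Phi> (Idt (catC \<Phi>) x)) (Idt (catS \<Phi>) (id x))"
    using graph_id Ieq_refl by (simp add: M_arr_def catS_simps catC_simps)
qed


lemma S_arrow_same_ext: "S_arrow \<Phi> i j R \<Longrightarrow> same_ext \<Phi> R R' \<Longrightarrow> S_arrow \<Phi> i j R'"
proof -
  assume a: "S_arrow \<Phi> i j R" and s: "same_ext \<Phi> R R'"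
  have e: "\<And>u v. u \<in> Scar \<Phi> \<Longrightarrow> v \<in> Scar \<Phi> \<Longrightarrow> R u v \<longleftrightarrow> R' u v" using s unfolding same_ext_def by blast
  have "functional_rel \<Phi> R' = functional_rel \<Phi> R" unfolding functional_rel_def using e by auto
  moreover have "rel_dom \<Phi> R' = rel_dom \<Phi> R" unfolding rel_dom_def using e by blast
  moreover have "rel_range \<Phi> R' = rel_range \<Phi> R" unfolding rel_range_def using e by blast
  ultimately show ?thesis using a unfolding S_arrow_def by simp
qed

lemma N_functor: "is_functor (catS \<Phi>) (catC \<Phi>) id (N_arr \<Phi>)"
  unfolding is_functor_def ball3
proof (intro conjI allI impI ballI)
  fix i j R i' j' R'
  assume a: "(i,j,R) \<in> Ar (catS \<Phi>)" and b: "(i',j',R') \<in> Ar (catS \<Phi>)"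
  have ar: "i \<in> Ic \<Phi>" "j \<in> Ic \<Phi>" "S_arrow \<Phi> i j R" "i' \<in> Ic \<Phi>" "j' \<in> Ic \<Phi>" "S_arrow \<Phi> i' j' R'"
    using a b by (auto simp: catS_simps)
  note s1 = N_fun_spec[OF ar(1-3)] and s2 = N_fun_spec[OF ar(4-6)]
  {
    assume e: "ArEq (catS \<Phi>) (i,j,R) (i',j',R')"
    then have e': "Ieq \<Phi> i i'" "Ieq \<Phi> j j'" "same_ext \<Phi> R R'" by (auto simp: catS_simps)
    have "same_ext \<Phi> (graph \<Phi> i j (N_fun \<Phi> i j R)) (graph \<Phi> i' j' (N_fun \<Phi> i' j' R'))"
      using s1 s2 e'(3) same_ext_trans same_ext_sym by metis
    then show "ArEq (catC \<Phi>) (N_arr \<Phi> (i,j,R)) (N_arr \<Phi> (i',j',R'))"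
      unfolding N_arr_def using C_eq_from_graph[OF ar(1,2) _ ar(4,5) _ e'(1,2)] s1 s2 by simp
  }
  {
    assume e: "ObEq (catS \<Phi>) (Cod (catS \<Phi>) (i,j,R)) (Dom (catS \<Phi>) (i',j',R'))"
    then have jj: "Ieq \<Phi> j i'" by (simp add: catS_simps)
    define p where "p = (SOME p. p \<in> Ip \<Phi> j i')"
    have p: "p \<in> Ip \<Phi> j i'" using jj unfolding Ieq_def p_def by (simp add: some_in_eq)
    define f where "f = N_fun \<Phi> i j R"
    define g where "g = N_fun \<Phi> i' j' R'"
    define h where "h = N_fun \<Phi> i j' (rel_comp \<Phi> R' R)"
    have f: "EF i j f" "same_ext \<Phi> (graph \<Phi> i j f) R" using s1 f_def by auto
    have g: "EF i' j' g" "same_ext \<Phi> (graph \<Phi> i' j' g) R'" using s2 g_def by auto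
    have cs: "S_arrow \<Phi> i j' (rel_comp \<Phi> R' R)"
    proof -
      have "(Comp (catS \<Phi>) (M_arr \<Phi> (i',j',g)) (M_arr \<Phi> (i,j,f))) = (i, j', rel_comp \<Phi> (graph \<Phi> i' j' g) (graph \<Phi> i j f))"
        by (simp add: M_arr_def catS_simps)
      have gc: "same_ext \<Phi> (graph \<Phi> i j' (g \<circ> Ftr \<Phi> p \<circ> f)) (rel_comp \<Phi> R' R)"
        using same_ext_trans[OF graph_comp[OF ar(1,2,4,5) f(1) g(1) p] rel_comp_resp[OF g(2) f(2)]] .
      have eh: "EF i j' (g \<circ> Ftr \<Phi> p \<circ> f)" using ext_comp ext_tr f g p ar by metis
      have sa: "S_arrow \<Phi> i j' (graph \<Phi> i j' (g \<circ> Ftr \<Phi> p \<circ> f))" using graph_S_arrow ar eh by blast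
      show ?thesis using sa gc
        by (rule S_arrow_same_ext)
    qed
    have h: "EF i j' h" "same_ext \<Phi> (graph \<Phi> i j' h) (rel_comp \<Phi> R' R)"
      using N_fun_spec[OF ar(1) ar(5) cs] h_def by auto
    have gc: "same_ext \<Phi> (graph \<Phi> i j' (g \<circ> Ftr \<Phi> p \<circ> f)) (rel_comp \<Phi> R' R)"
      using same_ext_trans[OF graph_comp[OF ar(1,2,4,5) f(1) g(1) p] rel_comp_resp[OF g(2) f(2)]] .
    have eh: "EF i j' (g \<circ> Ftr \<Phi> p \<circ> f)" using ext_comp ext_tr f g p ar by metis
    have "ArEq (catC \<Phi>) (i, j', h) (i, j', g \<circ> Ftr \<Phi> p \<circ> f)"
      using C_eq_from_graph[OF ar(1,5) h(1) ar(1,5) eh Ieq_refl[OF ar(1)] Ieq_refl[OF ar(5)]]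
        same_ext_trans[OF h(2) same_ext_sym[OF gc]] by blast
    then show "ArEq (catC \<Phi>) (N_arr \<Phi> (Comp (catS \<Phi>) (i',j',R') (i,j,R)))
        (Comp (catC \<Phi>) (N_arr \<Phi> (i',j',R')) (N_arr \<Phi> (i,j,R)))"
      by (simp add: N_arr_def catS_simps catC_simps p_def f_def g_def h_def)
  }
next
  fix i j R assume a: "(i,j,R) \<in> Ar (catS \<Phi>)"
  then show "N_arr \<Phi> (i,j,R) \<in> Ar (catC \<Phi>)"
    using N_fun_spec by (simp add: N_arr_def catS_simps catC_simps)
  show "ObEq (catC \<Phi>) (Dom (catC \<Phi>) (N_arr \<Phi> (i, j, R))) (id (Dom (catS \<Phi>) (i, j, R)))"
    using a Ieq_refl by (simp add: N_arr_def catS_simps catC_simps)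
  show "ObEq (catC \<Phi>) (Cod (catC \<Phi>) (N_arr \<Phi> (i, j, R))) (id (Cod (catS \<Phi>) (i, j, R)))"
    using a Ieq_refl by (simp add: N_arr_def catS_simps catC_simps)
next
  fix x assume "x \<in> Ob (catS \<Phi>)" then show "id x \<in> Ob (catC \<Phi>)" by (simp add: catC_simps catS_simps)
next
  fix x y assume "ObEq (catS \<Phi>) x y" then show "ObEq (catC \<Phi>) (id x) (id y)" by (simp add: catC_simps catS_simps)
next
  fix x assume x: "x \<in> Ob (catS \<Phi>)"
  then have xi: "x \<in> Ic \<Phi>" by (simp add: catS_simps)
  have sa: "S_arrow \<Phi> x x (id_rel \<Phi> x)"
  proof -
    have sa: "S_arrow \<Phi> x x (graph \<Phi> x x id)" using graph_S_arrow xi ext_id by blast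
    show ?thesis using sa graph_id[OF xi]
      by (rule S_arrow_same_ext)
  qed
  note s = N_fun_spec[OF xi xi sa]
  have "ArEq (catC \<Phi>) (x, x, N_fun \<Phi> x x (id_rel \<Phi> x)) (x, x, id)"
    using C_eq_from_graph[OF xi xi _ xi xi ext_id[OF xi] Ieq_refl[OF xi] Ieq_refl[OF xi]] s
      same_ext_trans[OF _ same_ext_sym[OF graph_id[OF xi]]] by blast
  then show "ArEq (catC \<Phi>) (N_arr \<Phi> (Idt (catS \<Phi>) x)) (Idt (catC \<Phi>) (id x))"
    by (simp add: N_arr_def catS_simps catC_simps)
qed

lemma MN_id: "is_identity_functor (catS \<Phi>) (id \<circ> id) (M_arr \<Phi> \<circ> N_arr \<Phi>)"
  unfolding is_identity_functor_def ball3
proof (intro conjI allI impI ballI)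
  fix x assume "x \<in> Ob (catS \<Phi>)" then show "ObEq (catS \<Phi>) ((id \<circ> id) x) x"
    using Ieq_refl by (simp add: catS_simps)
next
  fix i j R assume a: "(i,j,R) \<in> Ar (catS \<Phi>)"
  then have ar: "i \<in> Ic \<Phi>" "j \<in> Ic \<Phi>" "S_arrow \<Phi> i j R" by (auto simp: catS_simps)
  show "ArEq (catS \<Phi>) ((M_arr \<Phi> \<circ> N_arr \<Phi>) (i,j,R)) (i,j,R)"
    using N_fun_spec[OF ar] Ieq_refl ar by (simp add: M_arr_def N_arr_def catS_simps)
qed

lemma NM_id: "is_identity_functor (catC \<Phi>) (id \<circ> id) (N_arr \<Phi> \<circ> M_arr \<Phi>)"
  unfolding is_identity_functor_def ball3
proof (intro conjI allI impI ballI)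
  fix x assume "x \<in> Ob (catC \<Phi>)" then show "ObEq (catC \<Phi>) ((id \<circ> id) x) x"
    using Ieq_refl by (simp add: catC_simps)
next
  fix i j f assume a: "(i,j,f) \<in> Ar (catC \<Phi>)"
  then have ar: "i \<in> Ic \<Phi>" "j \<in> Ic \<Phi>" "EF i j f" by (auto simp: catC_simps)
  note s = N_fun_spec[OF ar(1,2) graph_S_arrow[OF ar]]
  have "ArEq (catC \<Phi>) (i, j, N_fun \<Phi> i j (graph \<Phi> i j f)) (i,j,f)"
    using C_eq_from_graph[OF ar(1,2) _ ar Ieq_refl[OF ar(1)] Ieq_refl[OF ar(2)]] s by blast
  then show "ArEq (catC \<Phi>) ((N_arr \<Phi> \<circ> M_arr \<Phi>) (i,j,f)) (i,j,f)"
    by (simp add: M_arr_def N_arr_def)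
qed

lemma part2: "\<forall>i\<in>Ic \<Phi>. \<forall>j\<in>Ic \<Phi>. \<forall>R. S_arrow \<Phi> i j R \<longrightarrow>
            (\<exists>f. ext_fun (Fc \<Phi> i) (Feq \<Phi> i) (Fc \<Phi> j) (Feq \<Phi> j) f \<and>
                 same_ext \<Phi> (graph \<Phi> i j f) R \<and>
                 (\<forall>g. ext_fun (Fc \<Phi> i) (Feq \<Phi> i) (Fc \<Phi> j) (Feq \<Phi> j) g \<and>
                      same_ext \<Phi> (graph \<Phi> i j g) R \<longrightarrow> ext_eq (Fc \<Phi> i) (Feq \<Phi> j) f g))"
proof (intro ballI allI impI)
  fix i j R assume i: "i \<in> Ic \<Phi>" and j: "j \<in> Ic \<Phi>" and R: "S_arrow \<Phi> i j R"
  obtain f where f: "EF i j f" "same_ext \<Phi> (graph \<Phi> i j f) R" using exist_fun[OF i j R] by blast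
  show "\<exists>f. EF i j f \<and> same_ext \<Phi> (graph \<Phi> i j f) R \<and>
      (\<forall>g. EF i j g \<and> same_ext \<Phi> (graph \<Phi> i j g) R \<longrightarrow> ext_eq (Fc \<Phi> i) (Feq \<Phi> j) f g)"
    using f unique_fun[OF i j f(1)] same_ext_trans same_ext_sym by blast
qed

end

theorem mainTheorem7:
  fixes \<Phi> :: "('i, 'p, 'a) family"
  assumes "pi_family \<Phi>"
  shows "is_functor (catC \<Phi>) (catS \<Phi>) id (M_arr \<Phi>)
       \<and> (\<forall>i\<in>Ic \<Phi>. \<forall>j\<in>Ic \<Phi>. \<forall>R. S_arrow \<Phi> i j R \<longrightarrow>
            (\<exists>f. ext_fun (Fc \<Phi> i) (Feq \<Phi> i) (Fc \<Phi> j) (Feq \<Phi> j) f \<and>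
                 same_ext \<Phi> (graph \<Phi> i j f) R \<and>
                 (\<forall>g. ext_fun (Fc \<Phi> i) (Feq \<Phi> i) (Fc \<Phi> j) (Feq \<Phi> j) g \<and>
                      same_ext \<Phi> (graph \<Phi> i j g) R \<longrightarrow> ext_eq (Fc \<Phi> i) (Feq \<Phi> j) f g)))
       \<and> is_functor (catS \<Phi>) (catC \<Phi>) id (N_arr \<Phi>)
       \<and> is_identity_functor (catS \<Phi>) (id \<circ> id) (M_arr \<Phi> \<circ> N_arr \<Phi>)
       \<and> is_identity_functor (catC \<Phi>) (id \<circ> id) (N_arr \<Phi> \<circ> M_arr \<Phi>)"
proof -
  interpret pf \<Phi> using assms by (unfold_locales)
  show ?thesis using M_functor part2 N_functor MN_id NM_id by blast
qed

end
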